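(* For every integer $n\ge 4$ and every integer $t$ with $2\le t\le n-3$, $\mathrm{wdim}_{2n-2t}(K_n\times K_n)=n^2-tn$.
   Context: $K_n\times K_n$ is the direct product of two complete graphs on $n$ vertices: vertex set $[n]\times[n]$ with $[n]=\{1,\dots,n\}$, and $(i,j)$ adjacent to $(i',j')$ iff $i\ne i'$ and $j\ne j'$. For a connected graph $G$ with distance $d_G$, vertices $x,y,z$ and $S\subseteq V(G)$, let $\Delta_z(x,y)=|d_G(x,z)-d_G(y,z)|$ and $\Delta_S(x,y)=\sum_{z\in S}\Delta_z(x,y)$. A set $S$ is a weak $k$-resolving set if $\Delta_S(x,y)\ge k$ for all distinct $x,y\in V(G)$, and $\mathrm{wdim}_k(G)$ is the minimum cardinality of a weak $k$-resolving set of $G$. *)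

theory Defs
  imports Main
begin

fun walk :: "'a set \<Rightarrow> ('a \<Rightarrow> 'a \<Rightarrow> bool) \<Rightarrow> nat \<Rightarrow> 'a \<Rightarrow> 'a \<Rightarrow> bool" where
  "walk V E 0 x y = (x \<in> V \<and> x = y)"
| "walk V E (Suc k) x y = (x \<in> V \<and> (\<exists>z\<in>V. E x z \<and> walk V E k z y))"

(* graph distance: length of a shortest walk (used only on connected graphs) *)
definition gdist :: "'a set \<Rightarrow> ('a \<Rightarrow> 'a \<Rightarrow> bool) \<Rightarrow> 'a \<Rightarrow> 'a \<Rightarrow> nat" where
  "gdist V E x y = (LEAST k. walk V E k x y)"

definition connected_graph :: "'a set \<Rightarrow> ('a \<Rightarrow> 'a \<Rightarrow> bool) \<Rightarrow> bool" where
  "connected_graph V E \<longleftrightarrow> (\<forall>x\<in>V. \<forall>y\<in>V. \<exists>k. walk V E k x y)"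

definition Delta :: "'a set \<Rightarrow> ('a \<Rightarrow> 'a \<Rightarrow> bool) \<Rightarrow> 'a \<Rightarrow> 'a \<Rightarrow> 'a \<Rightarrow> nat" where
  "Delta V E z x y = nat \<bar>int (gdist V E x z) - int (gdist V E y z)\<bar>"

definition DeltaS :: "'a set \<Rightarrow> ('a \<Rightarrow> 'a \<Rightarrow> bool) \<Rightarrow> 'a set \<Rightarrow> 'a \<Rightarrow> 'a \<Rightarrow> nat" where
  "DeltaS V E S x y = (\<Sum>z\<in>S. Delta V E z x y)"

definition weak_k_resolving :: "'a set \<Rightarrow> ('a \<Rightarrow> 'a \<Rightarrow> bool) \<Rightarrow> nat \<Rightarrow> 'a set \<Rightarrow> bool" where
  "weak_k_resolving V E k S \<longleftrightarrow> S \<subseteq> V \<and>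
     (\<forall>x\<in>V. \<forall>y\<in>V. x \<noteq> y \<longrightarrow> DeltaS V E S x y \<ge> k)"

definition wdim :: "nat \<Rightarrow> 'a set \<Rightarrow> ('a \<Rightarrow> 'a \<Rightarrow> bool) \<Rightarrow> nat" where
  "wdim k V E = (LEAST m. \<exists>S. weak_k_resolving V E k S \<and> card S = m)"

definition KxK_V :: "nat \<Rightarrow> (nat \<times> nat) set" where
  "KxK_V n = {1..n} \<times> {1..n}"

definition KxK_E :: "(nat \<times> nat) \<Rightarrow> (nat \<times> nat) \<Rightarrow> bool" where
  "KxK_E u v \<longleftrightarrow> fst u \<noteq> fst v \<and> snd u \<noteq> snd v"

end

theory Submission
  imports Defs
begin

definition dd :: "nat \<times> nat \<Rightarrow> nat \<times> nat \<Rightarrow> nat" where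
  "dd x z = (if x = z then 0 else if KxK_E x z then 1 else 2)"

lemma third: "n \<ge> 3 \<Longrightarrow> \<exists>r\<in>{1..n}. r \<noteq> (a::nat) \<and> r \<noteq> c"
proof -
  assume n: "n \<ge> 3"
  show ?thesis
  proof (cases "a \<noteq> 1 \<and> c \<noteq> 1")
    case True then show ?thesis using n by (intro bexI[of _ 1]) auto
  next
    case f1: False
    show ?thesis
    proof (cases "a \<noteq> 2 \<and> c \<noteq> 2")
      case True then show ?thesis using n by (intro bexI[of _ 2]) auto
    next
      case False then show ?thesis using n f1 by (intro bexI[of _ 3]) auto
    qed
  qed
qed

lemma walk1: "walk V E (Suc 0) x y \<longleftrightarrow> x \<in> V \<and> y \<in> V \<and> E x y"
  by auto

lemma gdist_eq:
  assumes n: "n \<ge> 3" and x: "x \<in> KxK_V n" and z: "z \<in> KxK_V n"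
  shows "gdist (KxK_V n) KxK_E x z = dd x z"
proof (cases "x = z")
  case True
  then show ?thesis unfolding gdist_def dd_def using x
    by (intro Least_equality) auto
next
  case ne: False
  show ?thesis
  proof (cases "KxK_E x z")
    case True
    have "walk (KxK_V n) KxK_E (Suc 0) x z" using True x z by auto
    moreover have "\<not> walk (KxK_V n) KxK_E 0 x z" using ne by simp
    ultimately show ?thesis unfolding gdist_def dd_def using True ne
      by (intro Least_equality) (auto simp: not_less_eq_eq[symmetric] le_less  elim: walk.elims)
  next
    case False
    obtain r where r: "r\<in>{1..n}" "r \<noteq> fst x" "r \<noteq> fst z" using third[OF n] by blast
    obtain s where s: "s\<in>{1..n}" "s \<noteq> snd x" "s \<noteq> snd z" using third[OF n] by blast
    have rs: "(r,s) \<in> KxK_V n" using r s by (simp add: KxK_V_def)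
    have "walk (KxK_V n) KxK_E 2 x z" using rs r s x z
      by (simp add: numeral_2_eq_2 KxK_E_def) (metis fst_conv snd_conv)
    moreover have "\<not> walk (KxK_V n) KxK_E k x z" if "k < 2" for k
      using that ne False by (cases k) auto
    ultimately show ?thesis unfolding gdist_def dd_def using False ne
      by (intro Least_equality) (auto simp: not_less[symmetric])
  qed
qed

lemma Delta_dd:
  assumes "n \<ge> 3" "x \<in> KxK_V n" "y \<in> KxK_V n" "z \<in> KxK_V n"
  shows "Delta (KxK_V n) KxK_E z x y = nat \<bar>int (dd x z) - int (dd y z)\<bar>"
  using assms by (simp add: Delta_def gdist_eq)

lemma Delta_row:
  assumes "n \<ge> 3" "(a,b) \<in> KxK_V n" "(a,d) \<in> KxK_V n" "z \<in> KxK_V n" "b \<noteq> d"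
  shows "Delta (KxK_V n) KxK_E z (a,b) (a,d) =
     of_bool (snd z = b) + of_bool (snd z = d) + of_bool (z = (a,b)) + of_bool (z = (a,d))"
proof -
  obtain p q where z: "z = (p,q)" by (cases z)
  show ?thesis
    using assms unfolding z
    by (simp add: Delta_dd dd_def KxK_E_def)
qed

lemma Delta_col:
  assumes "n \<ge> 3" "(a,b) \<in> KxK_V n" "(c,b) \<in> KxK_V n" "z \<in> KxK_V n" "a \<noteq> c"
  shows "Delta (KxK_V n) KxK_E z (a,b) (c,b) =
     of_bool (fst z = a) + of_bool (fst z = c) + of_bool (z = (a,b)) + of_bool (z = (c,b))"
proof -
  obtain p q where z: "z = (p,q)" by (cases z)
  show ?thesis
    using assms unfolding z
    by (simp add: Delta_dd dd_def KxK_E_def)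
qed

lemma Delta_adj:
  assumes "n \<ge> 3" "(a,b) \<in> KxK_V n" "(c,d) \<in> KxK_V n" "z \<in> KxK_V n" "a \<noteq> c" "b \<noteq> d"
  shows "int (Delta (KxK_V n) KxK_E z (a,b) (c,d)) =
     of_bool (fst z = a) + of_bool (fst z = c) + of_bool (snd z = b) + of_bool (snd z = d)
     - of_bool (z = (a,b)) - of_bool (z = (c,d)) - 2 * of_bool (z = (a,d)) - 2 * of_bool (z = (c,b))"
proof -
  obtain p q where z: "z = (p,q)" by (cases z)
  show ?thesis
    using assms unfolding z
    by (simp add: Delta_dd dd_def KxK_E_def)
qed

definition rowc :: "(nat \<times> nat) set \<Rightarrow> nat \<Rightarrow> nat" where
  "rowc U a = card (U \<inter> {z. fst z = a})"
definition colc :: "(nat \<times> nat) set \<Rightarrow> nat \<Rightarrow> nat" where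
  "colc U b = card (U \<inter> {z. snd z = b})"

lemma sum_ind: "finite U \<Longrightarrow> (\<Sum>z\<in>U. (of_bool (P z) :: 'b::comm_semiring_1)) = of_nat (card (U \<inter> {z. P z}))"
  by (simp add: sum.inter_filter[symmetric])

lemma fin_sub: "U \<subseteq> KxK_V n \<Longrightarrow> finite U"
  unfolding KxK_V_def using finite_subset by blast

lemma DeltaS_row:
  assumes "n \<ge> 3" "(a,b) \<in> KxK_V n" "(a,d) \<in> KxK_V n" "U \<subseteq> KxK_V n" "b \<noteq> d"
  shows "DeltaS (KxK_V n) KxK_E U (a,b) (a,d) =
     colc U b + colc U d + of_bool ((a,b) \<in> U) + of_bool ((a,d) \<in> U)"
proof -
  have f: "finite U" using fin_sub assms by blast
  have "DeltaS (KxK_V n) KxK_E U (a,b) (a,d) = (\<Sum>z\<in>U.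
     of_bool (snd z = b) + of_bool (snd z = d) + of_bool (z = (a,b)) + of_bool (z = (a,d)))"
    unfolding DeltaS_def using assms by (intro sum.cong) (auto simp: Delta_row)
  also have "\<dots> = colc U b + colc U d + of_bool ((a,b) \<in> U) + of_bool ((a,d) \<in> U)"
    using f by (simp add: sum.distrib sum_ind colc_def)
  finally show ?thesis .
qed

lemma DeltaS_col:
  assumes "n \<ge> 3" "(a,b) \<in> KxK_V n" "(c,b) \<in> KxK_V n" "U \<subseteq> KxK_V n" "a \<noteq> c"
  shows "DeltaS (KxK_V n) KxK_E U (a,b) (c,b) =
     rowc U a + rowc U c + of_bool ((a,b) \<in> U) + of_bool ((c,b) \<in> U)"
proof -
  have f: "finite U" using fin_sub assms by blast
  have "DeltaS (KxK_V n) KxK_E U (a,b) (c,b) = (\<Sum>z\<in>U.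
     of_bool (fst z = a) + of_bool (fst z = c) + of_bool (z = (a,b)) + of_bool (z = (c,b)))"
    unfolding DeltaS_def using assms by (intro sum.cong) (auto simp: Delta_col)
  also have "\<dots> = rowc U a + rowc U c + of_bool ((a,b) \<in> U) + of_bool ((c,b) \<in> U)"
    using f by (simp add: sum.distrib sum_ind rowc_def)
  finally show ?thesis .
qed

lemma sum_single: "finite U \<Longrightarrow> (\<Sum>z\<in>U. (of_bool (z = w) :: 'b::comm_semiring_1)) = of_bool (w \<in> U)"
  by (simp add: of_bool_def sum.delta)

lemma DeltaS_adj:
  assumes "n \<ge> 3" "(a,b) \<in> KxK_V n" "(c,d) \<in> KxK_V n" "U \<subseteq> KxK_V n" "a \<noteq> c" "b \<noteq> d"
  shows "int (DeltaS (KxK_V n) KxK_E U (a,b) (c,d)) =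
     int (rowc U a) + int (rowc U c) + int (colc U b) + int (colc U d)
     - of_bool ((a,b) \<in> U) - of_bool ((c,d) \<in> U) - 2 * of_bool ((a,d) \<in> U) - 2 * of_bool ((c,b) \<in> U)"
proof -
  have f: "finite U" using fin_sub assms by blast
  have "int (DeltaS (KxK_V n) KxK_E U (a,b) (c,d)) = (\<Sum>z\<in>U.
     of_bool (fst z = a) + of_bool (fst z = c) + of_bool (snd z = b) + of_bool (snd z = d)
     - of_bool (z = (a,b)) - of_bool (z = (c,d)) - 2 * of_bool (z = (a,d)) - 2 * of_bool (z = (c,b)))"
    unfolding DeltaS_def of_nat_sum
    by (rule sum.cong[OF refl], rule Delta_adj) (use assms in auto)
  also have "\<dots> = int (rowc U a) + int (rowc U c) + int (colc U b) + int (colc U d)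
     - of_bool ((a,b) \<in> U) - of_bool ((c,d) \<in> U) - 2 * of_bool ((a,d) \<in> U) - 2 * of_bool ((c,b) \<in> U)"
    unfolding sum_subtractf sum.distrib sum_distrib_left[symmetric]
    unfolding sum_single[OF f] sum_ind[OF f] rowc_def colc_def ..
  finally show ?thesis .
qed
lemma L:
  fixes f :: "nat \<Rightarrow> nat" and n t :: nat
  assumes n: "n \<ge> 3" and t1: "t \<ge> 1"
    and sm: "(\<Sum>j\<in>{1..n}. f j) \<ge> n*t+1"
    and pr: "\<And>b d. b\<in>{1..n} \<Longrightarrow> d\<in>{1..n} \<Longrightarrow> b \<noteq> d \<Longrightarrow> f b \<ge> 1 \<Longrightarrow> f b + f d \<le> 2*t+1"
  shows "(\<forall>j\<in>{1..n}. f j \<ge> t) \<and> (\<exists>b\<in>{1..n}. f b \<ge> t+1)"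
proof -
  let ?A = "{1..n::nat}"
  have "\<exists>b\<in>?A. f b \<ge> t+1"
  proof (rule ccontr)
    assume "\<not> ?thesis"
    then have "\<forall>j\<in>?A. f j \<le> t" by auto
    then have "(\<Sum>j\<in>?A. f j) \<le> (\<Sum>j\<in>?A. t)" by (intro sum_mono) auto
    then show False using sm by (simp add: mult.commute)
  qed
  then obtain b where b: "b\<in>?A" "f b \<ge> t+1" by blast
  have split: "(\<Sum>j\<in>?A. f j) = f b + f d + (\<Sum>j\<in>?A-{b,d}. f j)" if "d\<in>?A" "d\<noteq>b" for d
  proof -
    have "?A = insert b (insert d (?A-{b,d}))" using b that by auto
    then have "(\<Sum>j\<in>?A. f j) = (\<Sum>j\<in>insert b (insert d (?A-{b,d})). f j)" by simp
    also have "\<dots> = f b + f d + (\<Sum>j\<in>?A-{b,d}. f j)" using that by simp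
    finally show ?thesis .
  qed
  have cardr: "card (?A-{b,d}) = n-2" if "d\<in>?A" "d\<noteq>b" for d
  proof -
    have "card (?A-{b,d}) = card ?A - card {b,d}"
      using b that by (intro card_Diff_subset) auto
    then show ?thesis using that by simp
  qed
  obtain d0 where d0: "d0\<in>?A" "d0\<noteq>b"
  proof -
    have "(if b = 1 then 2 else 1) \<in> ?A" "(if b = 1 then 2 else 1) \<noteq> b" using n by auto
    then show ?thesis using that by blast
  qed
  have oth: "f d \<le> 2*t+1 - f b" if "d\<in>?A" "d\<noteq>b" for d
    using pr[OF b(1) that(1)] that b by auto
  have restb: "(\<Sum>j\<in>?A-{b,d}. f j) \<le> (n-2) * (2*t+1 - f b)" if "d\<in>?A" "d\<noteq>b" for d
  proof -
    have "(\<Sum>j\<in>?A-{b,d}. f j) \<le> (\<Sum>j\<in>?A-{b,d}. 2*t+1 - f b)"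
      by (intro sum_mono oth) auto
    then show ?thesis using cardr[OF that] by simp
  qed
  have fb: "f b = t+1"
  proof (rule ccontr)
    assume "f b \<noteq> t+1"
    then have "2*t+1 - f b \<le> t - 1" using b by auto
    then have "(n-2) * (2*t+1 - f b) \<le> (n-2)*(t-1)" by simp
    then have "n*t+1 \<le> 2*t+1 + (n-2)*(t-1)"
      using sm split[OF d0] restb[OF d0] pr[OF b(1) d0(1) d0(2)[symmetric]] b by linarith
    moreover have "(n-2)*(t-1) + 2*t + 1 < n*t+1"
    proof -
      obtain m where m: "n = m + 3" using n by (metis add.commute le_Suc_ex)
      show ?thesis unfolding m using t1 by (cases t) (auto simp: algebra_simps)
    qed
    ultimately show False by linarith
  qed
  have "f d \<ge> t" if d: "d\<in>?A" for d
  proof (cases "d = b")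
    case True then show ?thesis using fb by simp
  next
    case False
    show ?thesis
    proof (rule ccontr)
      assume "\<not> ?thesis"
      then have "f d \<le> t - 1" by simp
      moreover have "(\<Sum>j\<in>?A-{b,d}. f j) \<le> (n-2) * t" using restb[OF d False] fb by simp
      ultimately have "n*t+1 \<le> t+1 + (t-1) + (n-2)*t"
        using sm split[OF d False] fb by linarith
      moreover have "t+1 + (t-1) + (n-2)*t < n*t+1"
      proof -
        obtain m where m: "n = m + 3" using n by (metis add.commute le_Suc_ex)
        show ?thesis unfolding m using t1 by (cases t) (auto simp: algebra_simps)
      qed
      ultimately show False by linarith
    qed
  qed
  then show ?thesis using b by blast
qed

lemma cardV: "card (KxK_V n) = n*n"
  by (simp add: KxK_V_def card_cartesian_product)

lemma colsum:
  assumes "T \<subseteq> KxK_V n"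
  shows "(\<Sum>b\<in>{1..n}. colc T b) = card T"
proof -
  have f: "finite T" using fin_sub assms by blast
  have "card T = (\<Sum>z\<in>T. (\<Sum>b\<in>{1..n}. (of_bool (snd z = b) :: nat)))"
  proof -
    have "(\<Sum>b\<in>{1..n}. (of_bool (snd z = b) :: nat)) = 1" if "z \<in> T" for z
    proof -
      have "snd z \<in> {1..n}" using that assms by (auto simp: KxK_V_def)
      then show ?thesis by (simp add: of_bool_def sum.delta')
    qed
    then show ?thesis by simp
  qed
  also have "\<dots> = (\<Sum>b\<in>{1..n}. (\<Sum>z\<in>T. (of_bool (snd z = b) :: nat)))"
    by (rule sum.swap)
  also have "\<dots> = (\<Sum>b\<in>{1..n}. colc T b)"
    unfolding sum_ind[OF f] colc_def by simp
  finally show ?thesis by simp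
qed

lemma rowsum:
  assumes "T \<subseteq> KxK_V n"
  shows "(\<Sum>a\<in>{1..n}. rowc T a) = card T"
proof -
  have f: "finite T" using fin_sub assms by blast
  have "card T = (\<Sum>z\<in>T. (\<Sum>b\<in>{1..n}. (of_bool (fst z = b) :: nat)))"
  proof -
    have "(\<Sum>b\<in>{1..n}. (of_bool (fst z = b) :: nat)) = 1" if "z \<in> T" for z
    proof -
      have "fst z \<in> {1..n}" using that assms by (auto simp: KxK_V_def)
      then show ?thesis by (simp add: of_bool_def sum.delta')
    qed
    then show ?thesis by simp
  qed
  also have "\<dots> = (\<Sum>b\<in>{1..n}. (\<Sum>z\<in>T. (of_bool (fst z = b) :: nat)))"
    by (rule sum.swap)
  also have "\<dots> = (\<Sum>b\<in>{1..n}. rowc T b)"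
    unfolding sum_ind[OF f] rowc_def by simp
  finally show ?thesis by simp
qed

lemma colV: "b \<in> {1..n} \<Longrightarrow> colc (KxK_V n) b = n"
proof -
  assume b: "b \<in> {1..n}"
  have "KxK_V n \<inter> {z. snd z = b} = {1..n} \<times> {b}" using b by (auto simp: KxK_V_def)
  then show ?thesis by (simp add: colc_def card_cartesian_product)
qed

lemma rowV: "a \<in> {1..n} \<Longrightarrow> rowc (KxK_V n) a = n"
proof -
  assume a: "a \<in> {1..n}"
  have "KxK_V n \<inter> {z. fst z = a} = {a} \<times> {1..n}" using a by (auto simp: KxK_V_def)
  then show ?thesis by (simp add: rowc_def card_cartesian_product)
qed

lemma colc_split: "S \<subseteq> KxK_V n \<Longrightarrow> b \<in> {1..n} \<Longrightarrow> colc S b + colc (KxK_V n - S) b = n"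
proof -
  assume S: "S \<subseteq> KxK_V n" and b: "b \<in> {1..n}"
  have f: "finite (KxK_V n)" by (simp add: KxK_V_def)
  have "KxK_V n \<inter> {z. snd z = b} = (S \<inter> {z. snd z = b}) \<union> ((KxK_V n - S) \<inter> {z. snd z = b})"
    using S by auto
  then have "colc (KxK_V n) b = colc S b + colc (KxK_V n - S) b"
  proof -
    have "card ((S \<inter> {z. snd z = b}) \<union> ((KxK_V n - S) \<inter> {z. snd z = b})) =
       card (S \<inter> {z. snd z = b}) + card ((KxK_V n - S) \<inter> {z. snd z = b})"
      by (rule card_Un_disjoint) (use f S finite_subset in auto)
    then show ?thesis unfolding colc_def using \<open>KxK_V n \<inter> _ = _\<close> by simp
  qed
  then show ?thesis using colV[OF b] by simp
qed

lemma rowc_split: "S \<subseteq> KxK_V n \<Longrightarrow> b \<in> {1..n} \<Longrightarrow> rowc S b + rowc (KxK_V n - S) b = n"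
proof -
  assume S: "S \<subseteq> KxK_V n" and b: "b \<in> {1..n}"
  have f: "finite (KxK_V n)" by (simp add: KxK_V_def)
  have "KxK_V n \<inter> {z. fst z = b} = (S \<inter> {z. fst z = b}) \<union> ((KxK_V n - S) \<inter> {z. fst z = b})"
    using S by auto
  then have "rowc (KxK_V n) b = rowc S b + rowc (KxK_V n - S) b"
  proof -
    have "card ((S \<inter> {z. fst z = b}) \<union> ((KxK_V n - S) \<inter> {z. fst z = b})) =
       card (S \<inter> {z. fst z = b}) + card ((KxK_V n - S) \<inter> {z. fst z = b})"
      by (rule card_Un_disjoint) (use f S finite_subset in auto)
    then show ?thesis unfolding rowc_def using \<open>KxK_V n \<inter> _ = _\<close> by simp
  qed
  then show ?thesis using rowV[OF b] by simp
qed


lemma lower: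
  fixes n t :: nat
  assumes t2: "2 \<le> t" and tn: "t + 3 \<le> n"
    and W: "weak_k_resolving (KxK_V n) KxK_E (2*n - 2*t) S"
  shows "n*(n-t) \<le> card S"
proof (rule ccontr)
  assume "\<not> ?thesis"
  then have lt: "card S < n*(n-t)" by simp
  have n3: "n \<ge> 3" using tn by simp
  have SV: "S \<subseteq> KxK_V n" using W by (simp add: weak_k_resolving_def)
  define T where "T = KxK_V n - S"
  have TV: "T \<subseteq> KxK_V n" by (auto simp: T_def)
  have fV: "finite (KxK_V n)" by (simp add: KxK_V_def)
  have cT: "card T = n*n - card S" unfolding T_def
    using card_Diff_subset[OF finite_subset[OF SV fV] SV] cardV by simp
  have "n*(n-t) = n*n - n*t" by (simp add: diff_mult_distrib2)
  moreover have "n*t \<le> n*n" using tn by simp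
  ultimately have cardT: "card T \<ge> n*t+1" using lt cT by linarith
  have mem: "\<And>z. z \<in> KxK_V n \<Longrightarrow> of_bool (z \<in> S) + of_bool (z \<in> T) = (1::nat)"
    by (auto simp: T_def)
  have krow: "colc T b + colc T d + of_bool ((a,b) \<in> T) + of_bool ((a,d) \<in> T) \<le> 2*t+2"
    if "a \<in> {1..n}" "b \<in> {1..n}" "d \<in> {1..n}" "b \<noteq> d" for a b d
  proof -
    have ab: "(a,b) \<in> KxK_V n" and ad: "(a,d) \<in> KxK_V n" using that by (auto simp: KxK_V_def)
    have "DeltaS (KxK_V n) KxK_E S (a,b) (a,d) \<ge> 2*n-2*t"
      using W ab ad that(4) by (auto simp: weak_k_resolving_def)
    then have "colc S b + colc S d + of_bool ((a,b) \<in> S) + of_bool ((a,d) \<in> S) \<ge> 2*n-2*t"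
      using DeltaS_row[OF n3 ab ad SV that(4)] by simp
    moreover have "colc S b + colc T b = n" "colc S d + colc T d = n"
      using colc_split[OF SV] that unfolding T_def by auto
    moreover have "of_bool ((a,b) \<in> S) + of_bool ((a,b) \<in> T) = (1::nat)"
       "of_bool ((a,d) \<in> S) + of_bool ((a,d) \<in> T) = (1::nat)" using mem ab ad by auto
    ultimately show ?thesis using tn by linarith
  qed
  have kcol: "rowc T a + rowc T c + of_bool ((a,b) \<in> T) + of_bool ((c,b) \<in> T) \<le> 2*t+2"
    if "a \<in> {1..n}" "b \<in> {1..n}" "c \<in> {1..n}" "a \<noteq> c" for a b c
  proof -
    have ab: "(a,b) \<in> KxK_V n" and cb: "(c,b) \<in> KxK_V n" using that by (auto simp: KxK_V_def)
    have "DeltaS (KxK_V n) KxK_E S (a,b) (c,b) \<ge> 2*n-2*t"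
      using W ab cb that(4) by (auto simp: weak_k_resolving_def)
    then have "rowc S a + rowc S c + of_bool ((a,b) \<in> S) + of_bool ((c,b) \<in> S) \<ge> 2*n-2*t"
      using DeltaS_col[OF n3 ab cb SV that(4)] by simp
    moreover have "rowc S a + rowc T a = n" "rowc S c + rowc T c = n"
      using rowc_split[OF SV] that unfolding T_def by auto
    moreover have "of_bool ((a,b) \<in> S) + of_bool ((a,b) \<in> T) = (1::nat)"
       "of_bool ((c,b) \<in> S) + of_bool ((c,b) \<in> T) = (1::nat)" using mem ab cb by auto
    ultimately show ?thesis using tn by linarith
  qed
  have fT: "finite T" using fin_sub TV by blast
  have Lc: "(\<forall>j\<in>{1..n}. colc T j \<ge> t) \<and> (\<exists>b\<in>{1..n}. colc T b \<ge> t+1)"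
  proof (rule L[OF n3])
    show "1 \<le> t" using t2 by simp
    show "n*t+1 \<le> (\<Sum>j\<in>{1..n}. colc T j)" using colsum[OF TV] cardT by simp
    fix b d assume bd: "b \<in> {1..n}" "d \<in> {1..n}" "b \<noteq> d" "1 \<le> colc T b"
    then have "T \<inter> {z. snd z = b} \<noteq> {}" unfolding colc_def by auto
    then obtain z where z: "z \<in> T" "snd z = b" by auto
    obtain a where za: "z = (a,b)" using z by (cases z) auto
    have a: "a \<in> {1..n}" using z za TV by (auto simp: KxK_V_def)
    show "colc T b + colc T d \<le> 2*t+1" using krow[OF a bd(1-3)] z za by simp
  qed
  have Lr: "(\<forall>j\<in>{1..n}. rowc T j \<ge> t) \<and> (\<exists>b\<in>{1..n}. rowc T b \<ge> t+1)"
  proof (rule L[OF n3])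
    show "1 \<le> t" using t2 by simp
    show "n*t+1 \<le> (\<Sum>j\<in>{1..n}. rowc T j)" using rowsum[OF TV] cardT by simp
    fix a c assume ac: "a \<in> {1..n}" "c \<in> {1..n}" "a \<noteq> c" "1 \<le> rowc T a"
    then have "T \<inter> {z. fst z = a} \<noteq> {}" unfolding rowc_def by auto
    then obtain z where z: "z \<in> T" "fst z = a" by auto
    obtain b where zb: "z = (a,b)" using z by (cases z) auto
    have b: "b \<in> {1..n}" using z zb TV by (auto simp: KxK_V_def)
    show "rowc T a + rowc T c \<le> 2*t+1" using kcol[OF ac(1) b ac(2,3)] z zb by simp
  qed
  obtain b where b: "b \<in> {1..n}" "colc T b \<ge> t+1" using Lc by blast
  then have "T \<inter> {z. snd z = b} \<noteq> {}" unfolding colc_def by auto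
  then obtain z where z: "z \<in> T" "snd z = b" by auto
  obtain a where za: "z = (a,b)" using z by (cases z) auto
  have a: "a \<in> {1..n}" using z za TV by (auto simp: KxK_V_def)
  have ra: "rowc T a \<ge> 2" using Lr a t2 by force
  have "\<exists>w \<in> T \<inter> {z. fst z = a}. w \<noteq> (a,b)"
  proof (rule ccontr)
    assume "\<not> ?thesis"
    then have "T \<inter> {z. fst z = a} \<subseteq> {(a,b)}" by auto
    then have "rowc T a \<le> 1" unfolding rowc_def
      by (metis card.empty card.insert empty_iff finite.intros(1) card_mono subset_singletonD order.refl le_zero_eq zero_le_one One_nat_def)
    then show False using ra by simp
  qed
  then obtain w where w: "w \<in> T" "fst w = a" "w \<noteq> (a,b)" by auto
  obtain d where wd: "w = (a,d)" using w by (cases w) auto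
  have d: "d \<in> {1..n}" "d \<noteq> b" using w wd TV by (auto simp: KxK_V_def)
  have "colc T d \<ge> t" using Lc d by blast
  then have "colc T b + colc T d + of_bool ((a,b) \<in> T) + of_bool ((a,d) \<in> T) \<ge> 2*t+3"
    using b z za w wd by simp
  then show False using krow[OF a b(1) d(1) d(2)[symmetric]] by linarith
qed


definition ww :: "nat \<Rightarrow> nat \<Rightarrow> nat \<Rightarrow> nat" where
  "ww n i j = (if j < i then j + n - i else j - i)"

definition S0 :: "nat \<Rightarrow> nat \<Rightarrow> (nat \<times> nat) set" where
  "S0 n t = Sigma {1..n} (\<lambda>i. {j\<in>{1..n}. t \<le> ww n i j})"

lemma count_gen:
  assumes inj: "inj_on h A" and im: "h ` A = {0..<n}" and tn: "t \<le> n"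
  shows "card {j\<in>A. t \<le> h j} = n - t"
proof -
  have "h ` {j\<in>A. t \<le> h j} = {t..<n}"
  proof
    show "h ` {j\<in>A. t \<le> h j} \<subseteq> {t..<n}" using im by auto
    show "{t..<n} \<subseteq> h ` {j\<in>A. t \<le> h j}"
    proof
      fix x assume x: "x \<in> {t..<n}"
      then have "x \<in> h ` A" using im by auto
      then obtain j where "j \<in> A" "x = h j" by auto
      then show "x \<in> h ` {j\<in>A. t \<le> h j}" using x by auto
    qed
  qed
  moreover have "inj_on h {j\<in>A. t \<le> h j}" using inj by (rule inj_on_subset) auto
  ultimately show ?thesis by (metis card_image card_atLeastLessThan)
qed

lemma ww_img_j: "i \<in> {1..n} \<Longrightarrow> (\<lambda>j. ww n i j) ` {1..n} = {0..<n}"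
   and ww_inj_j: "i \<in> {1..n} \<Longrightarrow> inj_on (\<lambda>j. ww n i j) {1..n}"
proof -
  assume i: "i \<in> {1..n}"
  show inj: "inj_on (\<lambda>j. ww n i j) {1..n}"
    using i by (auto simp: inj_on_def ww_def split: if_splits)
  have "(\<lambda>j. ww n i j) ` {1..n} \<subseteq> {0..<n}" using i by (auto simp: ww_def)
  moreover have "card ((\<lambda>j. ww n i j) ` {1..n}) = card {0..<n::nat}"
    using card_image[OF inj] by simp
  ultimately show "(\<lambda>j. ww n i j) ` {1..n} = {0..<n}"
    by (intro card_subset_eq) auto
qed

lemma ww_img_i: "j \<in> {1..n} \<Longrightarrow> (\<lambda>i. ww n i j) ` {1..n} = {0..<n}"
   and ww_inj_i: "j \<in> {1..n} \<Longrightarrow> inj_on (\<lambda>i. ww n i j) {1..n}"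
proof -
  assume j: "j \<in> {1..n}"
  show inj: "inj_on (\<lambda>i. ww n i j) {1..n}"
    using j by (auto simp: inj_on_def ww_def split: if_splits)
  have "(\<lambda>i. ww n i j) ` {1..n} \<subseteq> {0..<n}" using j by (auto simp: ww_def)
  moreover have "card ((\<lambda>i. ww n i j) ` {1..n}) = card {0..<n::nat}"
    using card_image[OF inj] by simp
  ultimately show "(\<lambda>i. ww n i j) ` {1..n} = {0..<n}"
    by (intro card_subset_eq) auto
qed

lemma S0_sub: "S0 n t \<subseteq> KxK_V n"
  by (auto simp: S0_def KxK_V_def)

lemma S0_card: "t \<le> n \<Longrightarrow> card (S0 n t) = n*(n-t)"
proof -
  assume tn: "t \<le> n"
  have "card (S0 n t) = (\<Sum>i\<in>{1..n}. card {j\<in>{1..n}. t \<le> ww n i j})"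
    unfolding S0_def by (rule card_SigmaI) auto
  also have "\<dots> = (\<Sum>i\<in>{1..n}. n - t)"
    by (intro sum.cong refl count_gen ww_inj_j ww_img_j tn)
  finally show ?thesis by simp
qed

lemma S0_row: "t \<le> n \<Longrightarrow> a \<in> {1..n} \<Longrightarrow> rowc (S0 n t) a = n - t"
proof -
  assume tn: "t \<le> n" and a: "a \<in> {1..n}"
  have "S0 n t \<inter> {z. fst z = a} = {a} \<times> {j\<in>{1..n}. t \<le> ww n a j}"
    using a by (auto simp: S0_def)
  then have "rowc (S0 n t) a = card {j\<in>{1..n}. t \<le> ww n a j}"
    by (simp add: rowc_def card_cartesian_product)
  also have "\<dots> = n - t" by (intro count_gen ww_inj_j ww_img_j tn a)
  finally show ?thesis .
qed

lemma S0_col: "t \<le> n \<Longrightarrow> b \<in> {1..n} \<Longrightarrow> colc (S0 n t) b = n - t"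
proof -
  assume tn: "t \<le> n" and b: "b \<in> {1..n}"
  have "S0 n t \<inter> {z. snd z = b} = (\<lambda>i. (i,b)) ` {i\<in>{1..n}. t \<le> ww n i b}"
    using b by (auto simp: S0_def)
  then have "colc (S0 n t) b = card ((\<lambda>i. (i,b)) ` {i\<in>{1..n}. t \<le> ww n i b})"
    by (simp add: colc_def)
  also have "\<dots> = card {i\<in>{1..n}. t \<le> ww n i b}"
    by (rule card_image) (auto simp: inj_on_def)
  also have "\<dots> = n - t" by (intro count_gen ww_inj_i ww_img_i tn b)
  finally show ?thesis .
qed

lemma upper:
  fixes n t :: nat
  assumes t2: "2 \<le> t" and tn: "t + 3 \<le> n"
  shows "weak_k_resolving (KxK_V n) KxK_E (2*n - 2*t) (S0 n t)"
  unfolding weak_k_resolving_def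
proof (intro conjI S0_sub ballI impI)
  have n3: "n \<ge> 3" and tle: "t \<le> n" using tn by auto
  fix x y assume x: "x \<in> KxK_V n" and y: "y \<in> KxK_V n" and xy: "x \<noteq> y"
  obtain a b where xab: "x = (a,b)" by (cases x)
  obtain c d where ycd: "y = (c,d)" by (cases y)
  have abn: "a \<in> {1..n}" "b \<in> {1..n}" "c \<in> {1..n}" "d \<in> {1..n}"
    using x y xab ycd by (auto simp: KxK_V_def)
  show "2*n - 2*t \<le> DeltaS (KxK_V n) KxK_E (S0 n t) x y"
  proof (cases "a = c")
    case True
    then have bd: "b \<noteq> d" using xy xab ycd by simp
    show ?thesis unfolding xab ycd True
      using DeltaS_row[OF n3 x[unfolded xab True] y[unfolded ycd] S0_sub bd]
        S0_col[OF tle abn(2)] S0_col[OF tle abn(4)] by simp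
  next
    case ac: False
    show ?thesis
    proof (cases "b = d")
      case True
      show ?thesis unfolding xab ycd True
        using DeltaS_col[OF n3 x[unfolded xab True] y[unfolded ycd] S0_sub ac]
          S0_row[OF tle abn(1)] S0_row[OF tle abn(3)] by simp
    next
      case bd: False
      have "int (DeltaS (KxK_V n) KxK_E (S0 n t) (a,b) (c,d)) =
        4 * int (n - t) - of_bool ((a,b) \<in> S0 n t) - of_bool ((c,d) \<in> S0 n t)
        - 2 * of_bool ((a,d) \<in> S0 n t) - 2 * of_bool ((c,b) \<in> S0 n t)"
        using DeltaS_adj[OF n3 x[unfolded xab] y[unfolded ycd] S0_sub ac bd]
          S0_row[OF tle abn(1)] S0_row[OF tle abn(3)]
          S0_col[OF tle abn(2)] S0_col[OF tle abn(4)] by simp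
      moreover have "of_bool P \<le> (1::int)" for P by simp
      ultimately have "int (DeltaS (KxK_V n) KxK_E (S0 n t) (a,b) (c,d)) \<ge> 4 * int (n - t) - 6"
        by (smt (verit))
      moreover have "int (n - t) \<ge> 3" using tn by simp
      ultimately have "int (DeltaS (KxK_V n) KxK_E (S0 n t) (a,b) (c,d)) \<ge> int (2*n - 2*t)"
        using tn by simp
      then show ?thesis unfolding xab ycd by simp
    qed
  qed
qed

theorem mainTheorem9:
  fixes n t :: nat
  assumes "n \<ge> 4" and "2 \<le> t" and "t + 3 \<le> n"
  shows "wdim (2*n - 2*t) (KxK_V n) KxK_E = n^2 - t*n"
proof -
  have eq: "n^2 - t*n = n*(n-t)" by (simp add: power2_eq_square diff_mult_distrib2 mult.commute)
  show ?thesis unfolding wdim_def eq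
  proof (rule Least_equality)
    show "\<exists>S. weak_k_resolving (KxK_V n) KxK_E (2*n - 2*t) S \<and> card S = n*(n-t)"
      using upper[OF assms(2,3)] S0_card[of t n] assms(3) by auto
  next
    fix m assume "\<exists>S. weak_k_resolving (KxK_V n) KxK_E (2*n - 2*t) S \<and> card S = m"
    then show "n*(n-t) \<le> m" using lower[OF assms(2,3)] by blast
  qed
qed

end
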